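(* Let $p_1,p_2,q_1,q_2\in\mathbb C\setminus\{0\}$, and suppose the multiplicative subgroup of $\mathbb C^*$ generated by $p_1$ and $p_2$ is dense in $\mathbb C$. If $f\colon\mathbb C\to\mathbb C$ is a homeomorphism with $f(p_rw)=q_rf(w)$ for all $w\in\mathbb C$, $r=1,2$, then there exist $\gamma\in\mathbb C$ and $\alpha\in\mathbb C$ with $\operatorname{Re}\alpha>-1$ such that either $f(w)=\gamma w|w|^{\alpha}$ for all $w\in\mathbb C$, or $f(w)=\gamma\overline{w}|w|^{\alpha}$ for all $w\in\mathbb C$ (with $f(0)=0$).
   Context: For $w\neq0$ and complex $\alpha$, $|w|^\alpha=e^{\alpha\ln|w|}$. *)

theory Defs
  imports "HOL-Analysis.Analysis"
begin

text \<open>The multiplicative subgroup of the nonzero complex numbers generated by p1 and p2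
  (abelian, so it consists of all products p1^m p2^n with integers m, n).\<close>
definition mult_subgroup2 :: "complex \<Rightarrow> complex \<Rightarrow> complex set" where
  "mult_subgroup2 p1 p2 = {p1 powi m * p2 powi n | m n :: int. True}"

definition abs_cpow :: "complex \<Rightarrow> complex \<Rightarrow> complex" where
  "abs_cpow w \<alpha> = exp (\<alpha> * complex_of_real (ln (cmod w)))"

end

theory Submission
  imports Defs
begin


lemma shift_nat:
  fixes f :: "complex \<Rightarrow> complex"
  assumes "\<forall>w. f (p * w) = q * f w"
  shows "f (p ^ n * w) = q ^ n * f w"
proof (induction n arbitrary: w)
  case 0 then show ?case by simp
next
  case (Suc n)
  have "f (p ^ Suc n * w) = f (p * (p ^ n * w))" by (simp add: mult.assoc)
  also have "\<dots> = q * f (p ^ n * w)" using assms by simp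
  finally show ?case using Suc by simp
qed

lemma shift_int:
  fixes f :: "complex \<Rightarrow> complex"
  assumes "p \<noteq> 0" "q \<noteq> 0" "\<forall>w. f (p * w) = q * f w"
  shows "f (p powi m * w) = q powi m * f w"
proof (cases "m \<ge> 0")
  case True
  then obtain n where "m = int n" by (metis nonneg_eq_int)
  then show ?thesis using shift_nat[OF assms(3)] by (simp add: power_int_of_nat)
next
  case False
  then obtain n where m: "m = - int n" by (metis neg_0_le_iff_le nonneg_eq_int le_cases minus_minus)
  have "f w = f (p ^ n * (inverse (p ^ n) * w))" using assms(1) by (simp add: mult.assoc[symmetric])
  also have "\<dots> = q ^ n * f (inverse (p ^ n) * w)" by (rule shift_nat[OF assms(3)])
  finally have "f (inverse (p ^ n) * w) = inverse (q ^ n) * f w"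
    using assms(2) by (simp add: field_simps)
  then show ?thesis using m by (simp add: power_int_minus power_int_of_nat)
qed



lemma additive_cont_scaleR:
  fixes L :: "complex \<Rightarrow> complex"
  assumes add: "\<And>x y. L (x + y) = L x + L y" and cont: "continuous_on UNIV L"
  shows "L (r *\<^sub>R z) = r *\<^sub>R L z"
proof -
  have L0: "L 0 = 0" using add[of 0 0] by simp
  have Lneg: "L (- x) = - L x" for x
  proof -
    have "L x + L (- x) = 0" using add[of x "-x"] L0 by simp
    then show ?thesis by (metis neg_eq_iff_add_eq_0)
  qed
  have Lnat: "L (of_nat n * x) = of_nat n * L x" for n x
    by (induction n) (simp_all add: L0 add distrib_right)
  have Lint: "L (of_int m * x) = of_int m * L x" for m x
  proof (cases "m \<ge> 0")
    case True
    then have "m = int (nat m)" by simp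
    then show ?thesis using Lnat[of "nat m" x] by (metis of_int_of_nat_eq)
  next
    case False
    then have m: "m = - int (nat (-m))" by simp
    have "L (of_int m * x) = L (- (of_nat (nat (-m)) * x))" by (subst m) simp
    also have "\<dots> = - (of_nat (nat (-m)) * L x)" by (simp only: Lneg Lnat)
    also have "\<dots> = of_int m * L x" by (subst (2) m) simp
    finally show ?thesis .
  qed
  have Lrat: "L (of_real r * x) = of_real r * L x" if "r \<in> \<rat>" for r x
  proof -
    from that obtain a b where ab: "r = of_int a / of_int b" "b \<noteq> 0"
      by (rule Rats_cases') auto
    have bz: "(of_int b :: complex) \<noteq> 0" using ab by simp
    have r: "(of_real r :: complex) = of_int a / of_int b" using ab(1) by simp
    have e: "of_int b * (of_real r * x) = of_int a * (x::complex)" unfolding r using bz by (simp add: field_simps)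
    have "of_int b * L (of_real r * x) = L (of_int b * (of_real r * x))" by (rule Lint[symmetric])
    also have "\<dots> = of_int a * L x" unfolding e by (rule Lint)
    finally have "of_int b * L (of_real r * x) = of_int a * L x" .
    then have "L (of_real r * x) = of_int a * L x / of_int b" using bz by (simp add: eq_divide_eq mult.commute)
    then show ?thesis unfolding r by simp
  qed
  have "continuous_on UNIV (\<lambda>r::real. L (of_real r * z))"
    by (rule continuous_on_compose2[OF cont]) (auto intro!: continuous_intros)
  then have "closed {r::real. L (of_real r * z) = of_real r * L z}"
    by (intro closed_Collect_eq) (auto intro!: continuous_intros)
  moreover have "\<rat> \<subseteq> {r::real. L (of_real r * z) = of_real r * L z}" using Lrat by auto
  ultimately have "closure \<rat> \<subseteq> {r::real. L (of_real r * z) = of_real r * L z}"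
    by (rule closure_minimal[rotated])
  then show ?thesis by (auto simp: Rats_closure_real scaleR_conv_of_real)
qed



theorem lemma3p1:
  fixes p1 p2 q1 q2 :: complex and f :: "complex \<Rightarrow> complex"
  assumes "p1 \<noteq> 0" "p2 \<noteq> 0" "q1 \<noteq> 0" "q2 \<noteq> 0"
    and "closure (mult_subgroup2 p1 p2) = UNIV"
    and "\<exists>g. homeomorphism UNIV UNIV f g"
    and "\<forall>w. f (p1 * w) = q1 * f w"
    and "\<forall>w. f (p2 * w) = q2 * f w"
  shows "\<exists>\<gamma> \<alpha> :: complex. Re \<alpha> > -1 \<and>
    ((\<forall>w. f w = (if w = 0 then 0 else \<gamma> * w * abs_cpow w \<alpha>)) \<or>
     (\<forall>w. f w = (if w = 0 then 0 else \<gamma> * cnj w * abs_cpow w \<alpha>)))"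
proof -
  note p1 = assms(1) and p2 = assms(2) and q1 = assms(3) and q2 = assms(4)
    and dense = assms(5) and f1 = assms(7) and f2 = assms(8)
  obtain g where hom: "homeomorphism UNIV UNIV f g" using assms(6) by blast
  have contf: "continuous_on UNIV f" using hom by (simp add: homeomorphism_def)
  have gf: "g (f x) = x" for x using hom by (simp add: homeomorphism_def)
  have inj: "f x = f y \<Longrightarrow> x = y" for x y using gf by metis
  have "q1 \<noteq> 1 \<or> q2 \<noteq> 1"
  proof (rule ccontr)
    assume "\<not> ?thesis"
    then have "q1 = 1" "q2 = 1" by auto
    then have "p1 = 1" "p2 = 1" using inj[of p1 1] inj[of p2 1] f1[rule_format, of 1] f2[rule_format, of 1] by simp_all
    then have "mult_subgroup2 p1 p2 = {1}" unfolding mult_subgroup2_def by auto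
    moreover have "(0::complex) \<in> closure (mult_subgroup2 p1 p2)" using dense by simp
    ultimately show False by simp
  qed
  then have f0: "f 0 = 0" using f1[rule_format, of 0] f2[rule_format, of 0] by auto
  have shift: "\<exists>c. \<forall>w. f (z * w) = c * f w" if "z \<in> mult_subgroup2 p1 p2" for z
  proof -
    from that obtain m n where z: "z = p1 powi m * p2 powi n" unfolding mult_subgroup2_def by auto
    have "f (z * w) = q1 powi m * q2 powi n * f w" for w
      unfolding z using shift_int[OF p1 q1 f1, of m] shift_int[OF p2 q2 f2, of n]
      by (simp add: mult.assoc)
    then show ?thesis by blast
  qed
  have mult: "f (z * w) * f 1 = f z * f w" for z w
  proof -
    have "continuous_on UNIV (\<lambda>z. f (z * w))"
      by (rule continuous_on_compose2[OF contf]) (auto intro!: continuous_intros)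
    then have "closed {z. f (z * w) * f 1 = f z * f w}"
      by (intro closed_Collect_eq) (auto intro!: continuous_intros contf)
    moreover have "mult_subgroup2 p1 p2 \<subseteq> {z. f (z * w) * f 1 = f z * f w}"
    proof
      fix z assume "z \<in> mult_subgroup2 p1 p2"
      then obtain c where c: "\<forall>w. f (z * w) = c * f w" using shift by blast
      then show "z \<in> {z. f (z * w) * f 1 = f z * f w}" using c[rule_format, of 1] by simp
    qed
    ultimately have "closure (mult_subgroup2 p1 p2) \<subseteq> {z. f (z * w) * f 1 = f z * f w}"
      by (rule closure_minimal[rotated])
    then show ?thesis using dense by auto
  qed
  define c where "c = f 1"
  have c0: "c \<noteq> 0" unfolding c_def using inj[of 1 0] f0 by auto
  define h where "h z = f z / c" for z
  have hmult: "h (z * w) = h z * h w" for z w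
    unfolding h_def using mult[of z w] c0 by (simp add: c_def field_simps)
  have h1: "h 1 = 1" unfolding h_def using c0 by (simp add: c_def)
  have h0: "h 0 = 0" unfolding h_def using f0 by simp
  have hinj: "h x = h y \<Longrightarrow> x = y" for x y unfolding h_def using c0 inj by simp
  have hnz: "z \<noteq> 0 \<Longrightarrow> h z \<noteq> 0" for z using hinj[of z 0] h0 by auto
  have conth: "continuous_on UNIV h" unfolding h_def using c0 by (auto intro!: continuous_intros contf)
  have fh: "f z = c * h z" for z unfolding h_def using c0 by simp
  have "continuous_on UNIV (\<lambda>z. h (exp z))"
    by (rule continuous_on_compose2[OF conth]) (auto intro!: continuous_intros)
  then obtain L0 where L0c: "continuous_on UNIV L0" and L0e: "\<And>z. h (exp z) = exp (L0 z)"
    using continuous_logarithm_on_contractible[of UNIV "\<lambda>z. h (exp z)"] hnz by auto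
  define L where "L z = L0 z - L0 0" for z
  have L00: "exp (L0 0) = 1" using L0e[of 0] h1 by simp
  have hL: "h (exp z) = exp (L z)" for z unfolding L_def using L0e L00 by (simp add: exp_diff)
  have Lc: "continuous_on UNIV L" unfolding L_def by (auto intro!: continuous_intros L0c)
  have L0': "L 0 = 0" unfolding L_def by simp
  have Ladd: "L (z + w) = L z + L w" for z w
  proof -
    define D where "D x = L (x + w) - L x - L w" for x
    have De: "exp (D x) = 1" for x
    proof -
      have "exp (L (x + w)) = exp (L x) * exp (L w)"
        using hL[of "x + w"] hL[of x] hL[of w] hmult[of "exp x" "exp w"] by (simp add: exp_add)
      then show ?thesis unfolding D_def by (simp add: exp_diff)
    qed
    have Dc: "continuous_on UNIV D" unfolding D_def
      by (auto intro!: continuous_intros Lc continuous_on_compose2[OF Lc])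
    have "D constant_on UNIV"
    proof (rule continuous_discrete_range_constant[OF connected_UNIV Dc])
      fix x :: complex
      show "\<exists>e>0. \<forall>y. y \<in> UNIV \<and> D y \<noteq> D x \<longrightarrow> e \<le> norm (D y - D x)"
      proof (intro exI[of _ 1] conjI allI impI)
        fix y assume y: "y \<in> UNIV \<and> D y \<noteq> D x"
        have "exp (D y - D x) = 1" using De[of x] De[of y] by (simp add: exp_diff)
        then obtain n :: int where n: "Re (D y - D x) = 0" "Im (D y - D x) = of_int (2 * n) * pi"
          unfolding exp_eq_1 by blast
        have "n \<noteq> 0" using n y by (metis complex_eqI diff_eq_eq add_0 mult_zero_left of_int_0 mult_zero_right zero_complex.simps)
        then have "1 \<le> \<bar>n\<bar>" by linarith
        then have n1: "(1::real) \<le> \<bar>real_of_int n\<bar>" by (metis of_int_1_le_iff of_int_abs)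
        have "2 * pi \<le> 2 * \<bar>real_of_int n\<bar> * pi" using n1 pi_gt_zero by simp
        moreover have "\<bar>of_int (2 * n) * pi\<bar> = 2 * \<bar>real_of_int n\<bar> * pi" by (simp add: abs_mult)
        ultimately have "1 \<le> \<bar>of_int (2 * n) * pi\<bar>"
          using pi_gt3 by linarith
        also have "\<dots> \<le> norm (D y - D x)" using abs_Im_le_cmod[of "D y - D x"] n by simp
        finally show "1 \<le> norm (D y - D x)" .
      qed simp
    qed
    then obtain k where "\<And>x. D x = k" unfolding constant_on_def by blast
    then have "D z = D 0" by metis
    then show ?thesis unfolding D_def using L0' by (simp add: algebra_simps)
  qed
  have Lsc: "L (r *\<^sub>R z) = r *\<^sub>R L z" for r z
    by (rule additive_cont_scaleR[OF Ladd Lc])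
  define a where "a = L 1"
  define b where "b = L \<i>"
  have Lform: "L z = Re z *\<^sub>R a + Im z *\<^sub>R b" for z
  proof -
    have "z = Re z *\<^sub>R 1 + Im z *\<^sub>R \<i>" by (simp add: complex_eq_iff)
    then have "L z = L (Re z *\<^sub>R 1 + Im z *\<^sub>R \<i>)" by simp
    also have "\<dots> = Re z *\<^sub>R a + Im z *\<^sub>R b" unfolding a_def b_def by (simp only: Ladd Lsc)
    finally show ?thesis .
  qed
  have Lsi: "L (t *\<^sub>R \<i>) = t *\<^sub>R b" for t unfolding b_def by (rule Lsc)
  obtain k :: int where bk: "b = \<i> * of_int k"
  proof -
    have "exp (L ((2 * pi) *\<^sub>R \<i>)) = h (exp ((2 * pi) *\<^sub>R \<i>))" by (simp add: hL)
    also have "exp ((2 * pi) *\<^sub>R \<i>) = 1" by (simp add: scaleR_conv_of_real)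
    finally have "exp ((2 * pi) *\<^sub>R b) = 1" using h1 Lsi by simp
    then obtain n :: int where n: "Re ((2 * pi) *\<^sub>R b) = 0" "Im ((2 * pi) *\<^sub>R b) = of_int (2 * n) * pi"
      unfolding exp_eq_1 by blast
    then have "Re b = 0" "Im b = of_int n" by simp_all
    then have "b = \<i> * of_int n" by (simp add: complex_eq_iff)
    then show ?thesis by (rule that)
  qed
  have hform: "h z = exp (Re (Ln z) *\<^sub>R a + Im (Ln z) *\<^sub>R (\<i> * of_int k))" if "z \<noteq> 0" for z
  proof -
    have "h z = h (exp (Ln z))" using that by simp
    also have "\<dots> = exp (L (Ln z))" by (rule hL)
    finally show ?thesis using Lform bk by simp
  qed
  have hexpi: "h (exp (t *\<^sub>R \<i>)) = exp (t *\<^sub>R (\<i> * of_int k))" for t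
    using hL[of "t *\<^sub>R \<i>"] Lsi bk by simp
  have k0: "k \<noteq> 0"
  proof
    assume "k = 0"
    then have "h (exp (pi *\<^sub>R \<i>)) = 1" using hexpi by simp
    moreover have "exp (pi *\<^sub>R \<i>) = -1" by (simp add: scaleR_conv_of_real)
    ultimately have "h (-1) = h 1" using h1 by simp
    then show False using hinj by fastforce
  qed
  have k1: "k = 1 \<or> k = -1"
  proof -
    have "h (exp ((2 * pi / k) *\<^sub>R \<i>)) = exp ((2 * pi / k) *\<^sub>R (\<i> * of_int k))" by (rule hexpi)
    also have "(2 * pi / k) *\<^sub>R (\<i> * of_int k) = 2 * of_real pi * \<i>"
      using k0 by (simp add: scaleR_conv_of_real)
    also have "exp \<dots> = 1" by simp
    finally have "exp ((2 * pi / k) *\<^sub>R \<i>) = 1" using hinj h1 by metis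
    then obtain n :: int where n: "Im ((2 * pi / k) *\<^sub>R \<i>) = of_int (2 * n) * pi"
      unfolding exp_eq_1 by blast
    then have "2 * pi / k = 2 * n * pi" by simp
    then have "real_of_int (k * n) = 1" using k0 pi_gt_zero by (simp add: field_simps)
    then have "k * n = 1" by linarith
    then show ?thesis by (auto simp: zmult_eq_1_iff)
  qed
  have Rea: "Re a > 0"
  proof (rule ccontr)
    assume "\<not> Re a > 0"
    then have ra: "Re a \<le> 0" by simp
    from conth have "\<exists>d>0. \<forall>x'\<in>UNIV. dist x' 0 < d \<longrightarrow> dist (h x') (h 0) < 1"
      unfolding continuous_on_iff by (meson UNIV_I zero_less_one)
    then obtain d where d: "d > 0" "\<And>x'. dist x' 0 < d \<Longrightarrow> dist (h x') (h 0) < 1" by blast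
    define t where "t = min (d/2) (1/2)"
    have t: "t > 0" "t < 1" "t < d" using d by (auto simp: t_def)
    have "norm (h (of_real t)) < 1" using d(2)[of "of_real t"] t h0 by (simp add: dist_norm)
    moreover have "h (of_real t) = exp (ln t *\<^sub>R a)"
      using hform[of "of_real t"] t by (simp add: Ln_of_real)
    moreover have "ln t * Re a \<ge> 0" using t ra by (simp add: mult_nonpos_nonpos)
    ultimately show False by (simp add: norm_exp_eq_Re)
  qed
  have ReA: "Re (a - 1) > -1" using Rea by simp
  have disj: "(\<forall>w. f w = (if w = 0 then 0 else c * w * abs_cpow w (a - 1))) \<or>
     (\<forall>w. f w = (if w = 0 then 0 else c * cnj w * abs_cpow w (a - 1)))"
  proof -
    have LnE: "Ln w = of_real (ln (cmod w)) + \<i> * of_real (Im (Ln w))" if "w \<noteq> 0" for w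
      using that by (metis complex_eq Re_Ln)
    from k1 show ?thesis
    proof
      assume k: "k = 1"
      have "f w = c * w * abs_cpow w (a - 1)" if "w \<noteq> 0" for w
      proof -
        have "c * w * abs_cpow w (a - 1) = c * exp (Ln w + (a - 1) * of_real (ln (cmod w)))"
          using that by (simp add: abs_cpow_def exp_add)
        also have "Ln w + (a - 1) * of_real (ln (cmod w)) = Re (Ln w) *\<^sub>R a + Im (Ln w) *\<^sub>R (\<i> * of_int k)"
          using that k by (subst LnE) (simp_all add: scaleR_conv_of_real algebra_simps)
        finally show ?thesis using fh[of w] hform[OF that] by metis
      qed
      then show ?thesis using f0 by auto
    next
      assume k: "k = -1"
      have "f w = c * cnj w * abs_cpow w (a - 1)" if "w \<noteq> 0" for w
      proof -
        have "cnj w = exp (cnj (Ln w))" using that by (metis exp_Ln exp_cnj)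
        then have "c * cnj w * abs_cpow w (a - 1) = c * exp (cnj (Ln w) + (a - 1) * of_real (ln (cmod w)))"
          using that by (simp add: abs_cpow_def exp_add)
        also have "cnj (Ln w) + (a - 1) * of_real (ln (cmod w)) = Re (Ln w) *\<^sub>R a + Im (Ln w) *\<^sub>R (\<i> * of_int k)"
          using that k by (subst (1 2) LnE) (simp_all add: scaleR_conv_of_real algebra_simps)
        finally show ?thesis using fh[of w] hform[OF that] by metis
      qed
      then show ?thesis using f0 by auto
    qed
  qed
  show ?thesis using ReA disj by blast
qed

end
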